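(* Let $p$ be a prime, $k \in \mathbb{N}$, and $G_1, \dots, G_k$ finite-dimensional vector spaces over $\mathbb{F}_p$. For $\varepsilon > 0$ set $b(\varepsilon) = (\varepsilon/1000)^{2^{2k+2}}$ and $n(\varepsilon) = \lceil 10 \varepsilon^{-2^{k+1}} \rceil$. Let $f \colon G_1 \times \cdots \times G_k \to \mathbb{D}$ and let $\mu_1, \dots, \mu_n \in \operatorname{Spec}^{\mathrm{ml}}_{\varepsilon}(f)$ be multilinear forms such that $\operatorname{bias}(\mu_i - \mu_j) \leq b(\varepsilon)$ for all $i \neq j$. Then $n < n(\varepsilon)$.
   Context: $\mathbb{D} = \{z \in \mathbb{C} : |z| \leq 1\}$, $\omega = e^{2\pi i/p}$, $\mathbb{E}$ is the uniform average. For a multilinear form $\beta$ on $G_1 \times \cdots \times G_k$, $\operatorname{bias}\beta = \mathbb{E}_{x_1 \in G_1, \dots, x_k \in G_k}\omega^{\beta(x_1, \dots, x_k)}$. The box norm of $g \colon G_1 \times \cdots \times G_k \to \mathbb{C}$ is given by $\|g\|_{\square^k}^{2^k} = \mathbb{E}_{x_1, y_1 \in G_1, \dots, x_k, y_k \in G_k} \prod_{I \subseteq [k]} \operatorname{Conj}^{|I|} g(x_I, y_{[k]\setminus I})$, where $(x_I, y_{[k]\setminus I})$ has $i$-th coordinate $x_i$ if $i \in I$ and $y_i$ otherwise, and $\operatorname{Conj}^j$ is complex conjugation applied $j$ times. $\operatorname{Spec}^{\mathrm{ml}}_{\varepsilon}(f) = \{\mu \text{ multilinear form } G_1 \times \cdots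 \times G_k \to \mathbb{F}_p : \|f\omega^{\mu}\|_{\square^k} \geq \varepsilon\}$. *)

theory Defs
  imports "HOL-Analysis.Analysis"
begin

text \<open>Coordinates: an \<open>F_p\<close>-vector space of dimension \<open>d\<close> is modelled as \<open>F_p^d\<close>,
  vectors being functions \<open>nat \<Rightarrow> int\<close> with entries in \<open>{0..<p}\<close> on \<open>{..<d}\<close>
  and zero elsewhere.  Field elements of \<open>F_p\<close> are integers in \<open>{0..<p}\<close>.\<close>

definition vec_sp :: "nat \<Rightarrow> nat \<Rightarrow> (nat \<Rightarrow> int) set" where
  "vec_sp p d = {v. (\<forall>j<d. 0 \<le> v j \<and> v j < int p) \<and> (\<forall>j\<ge>d. v j = 0)}"

definition vadd :: "nat \<Rightarrow> (nat \<Rightarrow> int) \<Rightarrow> (nat \<Rightarrow> int) \<Rightarrow> (nat \<Rightarrow> int)" where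
  "vadd p u v = (\<lambda>j. (u j + v j) mod int p)"

definition vsmul :: "nat \<Rightarrow> int \<Rightarrow> (nat \<Rightarrow> int) \<Rightarrow> (nat \<Rightarrow> int)" where
  "vsmul p a v = (\<lambda>j. (a * v j) mod int p)"

definition prod_sp :: "nat \<Rightarrow> nat \<Rightarrow> (nat \<Rightarrow> nat) \<Rightarrow> (nat \<Rightarrow> nat \<Rightarrow> int) set" where
  "prod_sp p k d = (\<Pi>\<^sub>E i\<in>{..<k}. vec_sp p (d i))"

text \<open>Multilinear forms \<open>G_1 \<times> \<dots> \<times> G_k \<rightarrow> F_p\<close> (only values on the product matter).\<close>
definition multilinear_form ::
  "nat \<Rightarrow> nat \<Rightarrow> (nat \<Rightarrow> nat) \<Rightarrow> ((nat \<Rightarrow> nat \<Rightarrow> int) \<Rightarrow> int) \<Rightarrow> bool" where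
  "multilinear_form p k d \<mu> \<longleftrightarrow>
     (\<forall>x\<in>prod_sp p k d. 0 \<le> \<mu> x \<and> \<mu> x < int p) \<and>
     (\<forall>x\<in>prod_sp p k d. \<forall>i<k. \<forall>u\<in>vec_sp p (d i). \<forall>v\<in>vec_sp p (d i). \<forall>a\<in>{0..<int p}.
        \<mu> (x(i := vadd p u (vsmul p a v))) = (\<mu> (x(i := u)) + a * \<mu> (x(i := v))) mod int p)"

definition omega_pow :: "nat \<Rightarrow> int \<Rightarrow> complex" where
  "omega_pow p t = cis (2 * pi * real_of_int t / real p)"

definition bias :: "nat \<Rightarrow> nat \<Rightarrow> (nat \<Rightarrow> nat) \<Rightarrow> ((nat \<Rightarrow> nat \<Rightarrow> int) \<Rightarrow> int) \<Rightarrow> complex" where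
  "bias p k d \<beta> = (\<Sum>x\<in>prod_sp p k d. omega_pow p (\<beta> x)) / of_nat (card (prod_sp p k d))"

definition form_diff :: "nat \<Rightarrow> ((nat \<Rightarrow> nat \<Rightarrow> int) \<Rightarrow> int) \<Rightarrow> ((nat \<Rightarrow> nat \<Rightarrow> int) \<Rightarrow> int)
    \<Rightarrow> ((nat \<Rightarrow> nat \<Rightarrow> int) \<Rightarrow> int)" where
  "form_diff p \<mu> \<nu> = (\<lambda>x. (\<mu> x - \<nu> x) mod int p)"

definition conj_pow :: "nat \<Rightarrow> complex \<Rightarrow> complex" where
  "conj_pow j z = (if even j then z else cnj z)"

definition box_norm :: "nat \<Rightarrow> nat \<Rightarrow> (nat \<Rightarrow> nat) \<Rightarrow> ((nat \<Rightarrow> nat \<Rightarrow> int) \<Rightarrow> complex) \<Rightarrow> real" where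
  "box_norm p k d g =
     root (2 ^ k) (cmod ((\<Sum>(x, y)\<in>prod_sp p k d \<times> prod_sp p k d.
        \<Prod>I\<in>Pow {..<k}. conj_pow (card I) (g (\<lambda>i. if i \<in> I then x i else y i)))
      / of_nat (card (prod_sp p k d \<times> prod_sp p k d))))"

definition spec_ml :: "nat \<Rightarrow> nat \<Rightarrow> (nat \<Rightarrow> nat) \<Rightarrow> real \<Rightarrow> ((nat \<Rightarrow> nat \<Rightarrow> int) \<Rightarrow> complex)
    \<Rightarrow> ((nat \<Rightarrow> nat \<Rightarrow> int) \<Rightarrow> int) set" where
  "spec_ml p k d \<epsilon> f = {\<mu>. multilinear_form p k d \<mu> \<and>
      box_norm p k d (\<lambda>x. f x * omega_pow p (\<mu> x)) \<ge> \<epsilon>}"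

end

theory Submission
  imports Defs
begin

lemma vec_sp_alt: "vec_sp p d \<subseteq> {f. \<forall>x. (x \<in> {..<d} \<longrightarrow> f x \<in> {0..<int p}) \<and> (x \<notin> {..<d} \<longrightarrow> f x = 0)}"
proof
  fix v assume "v \<in> vec_sp p d"
  then have "\<forall>j<d. 0 \<le> v j \<and> v j < int p" "\<forall>j\<ge>d. v j = 0" unfolding vec_sp_def by blast+
  then show "v \<in> {f. \<forall>x. (x \<in> {..<d} \<longrightarrow> f x \<in> {0..<int p}) \<and> (x \<notin> {..<d} \<longrightarrow> f x = 0)}"
    by (simp add: not_less)
qed

lemma finite_vec_sp: "finite (vec_sp p d)"
  by (rule finite_subset[OF vec_sp_alt finite_set_of_finite_funs]) auto

lemma finite_prod_sp: "finite (prod_sp p k d)"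
  unfolding prod_sp_def by (rule finite_PiE) (auto simp: finite_vec_sp)

lemma zero_in_vec_sp: "p > 0 \<Longrightarrow> (\<lambda>j. 0) \<in> vec_sp p d"
  unfolding vec_sp_def by auto

lemma prod_sp_ne: "p > 0 \<Longrightarrow> prod_sp p k d \<noteq> {}"
  unfolding prod_sp_def using zero_in_vec_sp by (auto simp: PiE_eq_empty_iff)

lemma vec_mod: "v \<in> vec_sp p d \<Longrightarrow> v j mod int p = v j"
  unfolding vec_sp_def by (cases "j < d") auto

lemma omega_add: "omega_pow p (a + b) = omega_pow p a * omega_pow p b"
  unfolding omega_pow_def by (simp add: cis_mult distrib_left add_divide_distrib)

lemma omega_neg: "omega_pow p (- a) = cnj (omega_pow p a)"
  unfolding omega_pow_def by (simp add: cis_cnj)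

lemma omega_norm[simp]: "cmod (omega_pow p a) = 1"
  unfolding omega_pow_def by simp

lemma omega_mult_p: "p > 0 \<Longrightarrow> omega_pow p (int p * m) = 1"
proof -
  assume "p > 0"
  then have "2 * pi * real_of_int (int p * m) / real p = 2 * pi * real_of_int m" by simp
  then show ?thesis unfolding omega_pow_def
    by (metis cis_multiple_2pi Ints_of_int)
qed

lemma omega_mod: "p > 0 \<Longrightarrow> omega_pow p (a mod int p) = omega_pow p a"
proof -
  assume p: "p > 0"
  have "omega_pow p a = omega_pow p (a mod int p + int p * (a div int p))" by simp
  also have "\<dots> = omega_pow p (a mod int p) * omega_pow p (int p * (a div int p))" by (rule omega_add)
  also have "\<dots> = omega_pow p (a mod int p)" using p by (simp add: omega_mult_p)
  finally show ?thesis by simp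
qed

lemma omega_cong: "p > 0 \<Longrightarrow> a mod int p = b mod int p \<Longrightarrow> omega_pow p a = omega_pow p b"
  by (metis omega_mod)

lemma omega_zero[simp]: "omega_pow p 0 = 1"
  unfolding omega_pow_def by simp

lemma omega_sum: "omega_pow p (\<Sum>i\<in>A. g i) = (\<Prod>i\<in>A. omega_pow p (g i))"
  by (induction A rule: infinite_finite_induct) (auto simp: omega_add)


definition vsub :: "nat \<Rightarrow> (nat \<Rightarrow> int) \<Rightarrow> (nat \<Rightarrow> int) \<Rightarrow> (nat \<Rightarrow> int)" where
  "vsub p u v = (\<lambda>j. (u j - v j) mod int p)"

lemma vsub_in: "p > 0 \<Longrightarrow> u \<in> vec_sp p m \<Longrightarrow> v \<in> vec_sp p m \<Longrightarrow> vsub p u v \<in> vec_sp p m"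
  unfolding vec_sp_def vsub_def by auto

lemma vsub_recover:
  assumes "p > 0" "u \<in> vec_sp p m" "v \<in> vec_sp p m"
  shows "vadd p (vsub p u v) (vsmul p 1 v) = u"
proof
  fix j
  have "vadd p (vsub p u v) (vsmul p 1 v) j = ((u j - v j) mod int p + v j mod int p) mod int p"
    unfolding vadd_def vsub_def vsmul_def by simp
  also have "\<dots> = u j mod int p" by (simp add: mod_simps)
  also have "\<dots> = u j" using vec_mod[OF assms(2)] .
  finally show "vadd p (vsub p u v) (vsmul p 1 v) j = u j" .
qed

lemma prod_sp_iff: "x \<in> prod_sp p k d \<longleftrightarrow> (\<forall>i<k. x i \<in> vec_sp p (d i)) \<and> (\<forall>i. i \<ge> k \<longrightarrow> x i = undefined)"
  unfolding prod_sp_def PiE_def extensional_def by (auto simp: not_less)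

lemma prod_sp_upd: "x \<in> prod_sp p k d \<Longrightarrow> a < k \<Longrightarrow> v \<in> vec_sp p (d a) \<Longrightarrow> x(a := v) \<in> prod_sp p k d"
  unfolding prod_sp_iff by auto

lemma mod_comb:
  fixes A B C D E m :: int
  assumes "A mod m = C mod m" "B mod m = D mod m" "D = (E + C) mod m"
  shows "(- A + B) mod m = E mod m"
proof -
  have "(- A + B) mod m = (- C + D) mod m" using assms(1,2) by (metis mod_add_cong mod_minus_cong)
  also have "\<dots> = (- C + (E + C)) mod m" using assms(3) by (simp add: mod_diff_left_eq)
  also have "\<dots> = E mod m" by simp
  finally show ?thesis .
qed

lemma expand:
  assumes ml: "multilinear_form p k d \<nu>" and p: "p > 1"
    and x: "x \<in> prod_sp p k d" and y: "y \<in> prod_sp p k d"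
    and fin: "finite S"
  shows "S \<subseteq> {..<k} \<Longrightarrow> z \<in> prod_sp p k d \<Longrightarrow>
    (\<Sum>I\<in>Pow S. (-1)^card(S-I) * \<nu> (\<lambda>i. if i\<in>I then x i else if i\<in>S then y i else z i)) mod int p
     = \<nu> (\<lambda>i. if i\<in>S then vsub p (x i) (y i) else z i) mod int p"
  using fin
proof (induction S arbitrary: z rule: finite_induct)
  case empty
  then show ?case by simp
next
  case (insert a S)
  have a: "a < k" and S: "S \<subseteq> {..<k}" using insert.prems by auto
  have xa: "x a \<in> vec_sp p (d a)" and ya: "y a \<in> vec_sp p (d a)" using x y a unfolding prod_sp_iff by auto
  define zy where "zy = z(a := y a)"
  define zx where "zx = z(a := x a)"
  have zy_in: "zy \<in> prod_sp p k d" unfolding zy_def using prod_sp_upd[OF insert.prems(2) a ya] .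
  have zx_in: "zx \<in> prod_sp p k d" unfolding zx_def using prod_sp_upd[OF insert.prems(2) a xa] .
  define W where "W = (\<lambda>i. if i\<in>S then vsub p (x i) (y i) else z i)"
  have W_in: "W \<in> prod_sp p k d"
    using x y insert.prems S p unfolding prod_sp_iff W_def by (auto intro: vsub_in)
  define u where "u = vsub p (x a) (y a)"
  have u_in: "u \<in> vec_sp p (d a)" unfolding u_def using vsub_in p xa ya by auto
  define g where "g = (\<lambda>I. (-1::int)^card(insert a S-I) * \<nu> (\<lambda>i. if i\<in>I then x i else if i\<in>insert a S then y i else z i))"
  have inj: "inj_on (insert a) (Pow S)"
    using insert.hyps(2) by (auto simp: inj_on_def)
  have "(\<Sum>I\<in>Pow (insert a S). g I) = (\<Sum>I\<in>Pow S. g I) + (\<Sum>I\<in>insert a ` Pow S. g I)"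
    unfolding Pow_insert
    by (rule sum.union_disjoint) (use insert.hyps in auto)
  also have "(\<Sum>I\<in>insert a ` Pow S. g I) = (\<Sum>I\<in>Pow S. g (insert a I))"
    using sum.reindex[OF inj] by simp
  finally have split: "(\<Sum>I\<in>Pow (insert a S). g I) = (\<Sum>I\<in>Pow S. g I) + (\<Sum>I\<in>Pow S. g (insert a I))" .
  have t1: "g I = - ((-1)^card(S-I) * \<nu> (\<lambda>i. if i\<in>I then x i else if i\<in>S then y i else zy i))"
    if "I \<in> Pow S" for I
  proof -
    have "insert a S - I = insert a (S - I)" using that insert.hyps by auto
    then have c: "card (insert a S - I) = Suc (card (S - I))" using insert.hyps by simp
    have f: "(\<lambda>i. if i\<in>I then x i else if i\<in>insert a S then y i else z i)
           = (\<lambda>i. if i\<in>I then x i else if i\<in>S then y i else zy i)"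
      using that insert.hyps by (auto simp: zy_def)
    show ?thesis unfolding g_def c f by simp
  qed
  have t2: "g (insert a I) = (-1)^card(S-I) * \<nu> (\<lambda>i. if i\<in>I then x i else if i\<in>S then y i else zx i)"
    if "I \<in> Pow S" for I
  proof -
    have c: "insert a S - insert a I = S - I" using that insert.hyps by auto
    have f: "(\<lambda>i. if i\<in>insert a I then x i else if i\<in>insert a S then y i else z i)
           = (\<lambda>i. if i\<in>I then x i else if i\<in>S then y i else zx i)"
      using that insert.hyps by (auto simp: zx_def)
    show ?thesis unfolding g_def c f by simp
  qed
  have IHy: "(\<Sum>I\<in>Pow S. (-1)^card(S-I) * \<nu> (\<lambda>i. if i\<in>I then x i else if i\<in>S then y i else zy i)) mod int p
      = \<nu> (W(a := y a)) mod int p"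
  proof -
    have "(\<lambda>i. if i\<in>S then vsub p (x i) (y i) else zy i) = W(a := y a)"
      using insert.hyps by (auto simp: W_def zy_def)
    then show ?thesis using insert.IH[OF S zy_in] by simp
  qed
  have IHx: "(\<Sum>I\<in>Pow S. (-1)^card(S-I) * \<nu> (\<lambda>i. if i\<in>I then x i else if i\<in>S then y i else zx i)) mod int p
      = \<nu> (W(a := x a)) mod int p"
  proof -
    have "(\<lambda>i. if i\<in>S then vsub p (x i) (y i) else zx i) = W(a := x a)"
      using insert.hyps by (auto simp: W_def zx_def)
    then show ?thesis using insert.IH[OF S zx_in] by simp
  qed
  have mlW: "\<nu> (W(a := vadd p u (vsmul p 1 (y a)))) = (\<nu> (W(a := u)) + 1 * \<nu> (W(a := y a))) mod int p"
    using ml W_in a u_in ya p unfolding multilinear_form_def by auto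
  have rec: "vadd p u (vsmul p 1 (y a)) = x a" unfolding u_def using vsub_recover p xa ya by auto
  have tgt: "(\<lambda>i. if i\<in>insert a S then vsub p (x i) (y i) else z i) = W(a := u)"
    by (auto simp: W_def u_def)
  have "(\<Sum>I\<in>Pow (insert a S). g I) mod int p = \<nu> (W(a := u)) mod int p"
    unfolding split
    using mod_comb[OF IHy IHx] mlW rec by (simp add: t1 t2 sum_negf)
  then show ?case unfolding tgt g_def .
qed


definition psub :: "nat \<Rightarrow> nat \<Rightarrow> (nat \<Rightarrow> nat \<Rightarrow> int) \<Rightarrow> (nat \<Rightarrow> nat \<Rightarrow> int) \<Rightarrow> (nat \<Rightarrow> nat \<Rightarrow> int)" where
  "psub p k x y = (\<lambda>i. if i < k then vsub p (x i) (y i) else undefined)"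

definition padd :: "nat \<Rightarrow> nat \<Rightarrow> (nat \<Rightarrow> nat \<Rightarrow> int) \<Rightarrow> (nat \<Rightarrow> nat \<Rightarrow> int) \<Rightarrow> (nat \<Rightarrow> nat \<Rightarrow> int)" where
  "padd p k h y = (\<lambda>i. if i < k then (\<lambda>j. (h i j + y i j) mod int p) else undefined)"

lemma psub_in: "p > 0 \<Longrightarrow> x \<in> prod_sp p k d \<Longrightarrow> y \<in> prod_sp p k d \<Longrightarrow> psub p k x y \<in> prod_sp p k d"
  unfolding prod_sp_iff psub_def by (auto intro: vsub_in)

lemma padd_in: "p > 0 \<Longrightarrow> h \<in> prod_sp p k d \<Longrightarrow> y \<in> prod_sp p k d \<Longrightarrow> padd p k h y \<in> prod_sp p k d"
  unfolding prod_sp_iff padd_def vec_sp_def by auto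

lemma psub_padd: "h \<in> prod_sp p k d \<Longrightarrow> y \<in> prod_sp p k d \<Longrightarrow> psub p k (padd p k h y) y = h"
proof
  fix i assume h: "h \<in> prod_sp p k d" and y: "y \<in> prod_sp p k d"
  show "psub p k (padd p k h y) y i = h i"
  proof (cases "i < k")
    case True
    then have hi: "h i \<in> vec_sp p (d i)" using h unfolding prod_sp_iff by auto
    show ?thesis
    proof
      fix j
      have "psub p k (padd p k h y) y i j = ((h i j + y i j) mod int p - y i j) mod int p"
        using True unfolding psub_def padd_def vsub_def by simp
      also have "\<dots> = h i j mod int p" by (simp add: mod_diff_left_eq)
      also have "\<dots> = h i j" using vec_mod[OF hi] .
      finally show "psub p k (padd p k h y) y i j = h i j" .
    qed
  next
    case False
    then show ?thesis using h unfolding psub_def prod_sp_iff by auto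
  qed
qed

lemma padd_psub: "x \<in> prod_sp p k d \<Longrightarrow> y \<in> prod_sp p k d \<Longrightarrow> padd p k (psub p k x y) y = x"
proof
  fix i assume x: "x \<in> prod_sp p k d" and y: "y \<in> prod_sp p k d"
  show "padd p k (psub p k x y) y i = x i"
  proof (cases "i < k")
    case True
    then have xi: "x i \<in> vec_sp p (d i)" using x unfolding prod_sp_iff by auto
    show ?thesis
    proof
      fix j
      have "padd p k (psub p k x y) y i j = ((x i j - y i j) mod int p + y i j) mod int p"
        using True unfolding psub_def padd_def vsub_def by simp
      also have "\<dots> = x i j mod int p" by (simp add: mod_add_left_eq)
      also have "\<dots> = x i j" using vec_mod[OF xi] .
      finally show "padd p k (psub p k x y) y i j = x i j" .
    qed
  next
    case False
    then show ?thesis using x unfolding padd_def prod_sp_iff by auto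
  qed
qed

lemma reindex_psub:
  assumes "p > 0" "y \<in> prod_sp p k d"
  shows "(\<Sum>x\<in>prod_sp p k d. h (psub p k x y)) = (\<Sum>w\<in>prod_sp p k d. h w)"
  by (rule sum.reindex_bij_witness[of _ "\<lambda>w. padd p k w y" "\<lambda>x. psub p k x y"])
     (use assms in \<open>auto simp: psub_padd padd_psub psub_in padd_in\<close>)

lemma mix_in: "x \<in> prod_sp p k d \<Longrightarrow> y \<in> prod_sp p k d \<Longrightarrow> I \<subseteq> {..<k} \<Longrightarrow>
    (\<lambda>i. if i \<in> I then x i else y i) \<in> prod_sp p k d"
  unfolding prod_sp_iff by auto

lemma mod_mult_cong_r: "(b::int) mod m = c mod m \<Longrightarrow> (a*b) mod m = (a*c) mod m"
  by (metis mod_mult_right_eq)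

lemma phase:
  assumes ml: "multilinear_form p k d \<mu>" and p: "p > 1"
    and x: "x \<in> prod_sp p k d" and y: "y \<in> prod_sp p k d"
  shows "(\<Sum>I\<in>Pow {..<k}. (-1)^card I * \<mu> (\<lambda>i. if i\<in>I then x i else y i)) mod int p
       = ((-1)^k * \<mu> (psub p k x y)) mod int p"
proof -
  have sgn: "(-1::int)^card I = (-1)^k * (-1)^card({..<k} - I)" if "I \<in> Pow {..<k}" for I
  proof -
    have ck: "card I \<le> k" using that by (metis PowD card_lessThan card_mono finite_lessThan)
    have "card ({..<k} - I) = k - card I" using that by (simp add: card_Diff_subset finite_subset)
    then have "(-1::int)^k * (-1)^card({..<k} - I) = (-1)^(card I + 2 * (k - card I))"
    proof -
      have e: "k + (k - card I) = card I + 2 * (k - card I)" using ck by simp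
      show ?thesis unfolding \<open>card ({..<k} - I) = k - card I\<close> power_add[symmetric] e ..
    qed
    also have "\<dots> = (-1)^card I" by (simp add: power_add power_mult)
    finally show ?thesis by simp
  qed
  have fn: "(\<lambda>i. if i\<in>I then x i else y i) = (\<lambda>i. if i\<in>I then x i else if i\<in>{..<k} then y i else y i)" for I
    by auto
  have A: "(\<Sum>I\<in>Pow {..<k}. (-1)^card I * \<mu> (\<lambda>i. if i\<in>I then x i else y i))
      = (-1)^k * (\<Sum>I\<in>Pow {..<k}. (-1)^card({..<k} - I) * \<mu> (\<lambda>i. if i\<in>I then x i else if i\<in>{..<k} then y i else y i))"
    unfolding sum_distrib_left
  proof (rule sum.cong[OF refl])
    fix I assume I: "I \<in> Pow {..<k}"
    show "(-1)^card I * \<mu> (\<lambda>i. if i\<in>I then x i else y i) = (-1)^k * ((-1)^card({..<k} - I) * \<mu> (\<lambda>i. if i\<in>I then x i else if i\<in>{..<k} then y i else y i))"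
      unfolding sgn[OF I] mult.assoc fn[of I] ..
  qed
  have B: "(\<Sum>I\<in>Pow {..<k}. (-1)^card({..<k} - I) * \<mu> (\<lambda>i. if i\<in>I then x i else if i\<in>{..<k} then y i else y i)) mod int p
      = \<mu> (\<lambda>i. if i\<in>{..<k} then vsub p (x i) (y i) else y i) mod int p"
    by (rule expand[OF ml p x y]) (use y in auto)
  have C: "(\<lambda>i. if i\<in>{..<k} then vsub p (x i) (y i) else y i) = psub p k x y"
    using y unfolding psub_def prod_sp_iff by auto
  show ?thesis unfolding A by (rule mod_mult_cong_r[OF B[unfolded C]])
qed

lemma conj_pow_mult: "conj_pow c (a * b) = conj_pow c a * conj_pow c b"
  unfolding conj_pow_def by simp

lemma conj_pow_omega: "conj_pow c (omega_pow p t) = omega_pow p ((-1)^c * t)"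
  unfolding conj_pow_def by (simp add: omega_neg)

lemma box_term:
  assumes ml: "multilinear_form p k d \<mu>" and p: "p > 1"
    and x: "x \<in> prod_sp p k d" and y: "y \<in> prod_sp p k d"
  shows "(\<Prod>I\<in>Pow {..<k}. conj_pow (card I) ((\<lambda>z. f z * omega_pow p (\<mu> z)) (\<lambda>i. if i \<in> I then x i else y i)))
     = (\<Prod>I\<in>Pow {..<k}. conj_pow (card I) (f (\<lambda>i. if i \<in> I then x i else y i)))
       * omega_pow p ((-1)^k * \<mu> (psub p k x y))"
proof -
  have "(\<Prod>I\<in>Pow {..<k}. conj_pow (card I) ((\<lambda>z. f z * omega_pow p (\<mu> z)) (\<lambda>i. if i \<in> I then x i else y i)))
     = (\<Prod>I\<in>Pow {..<k}. conj_pow (card I) (f (\<lambda>i. if i \<in> I then x i else y i)))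
       * (\<Prod>I\<in>Pow {..<k}. omega_pow p ((-1)^card I * \<mu> (\<lambda>i. if i \<in> I then x i else y i)))"
    by (simp add: conj_pow_mult conj_pow_omega prod.distrib)
  also have "(\<Prod>I\<in>Pow {..<k}. omega_pow p ((-1)^card I * \<mu> (\<lambda>i. if i \<in> I then x i else y i)))
      = omega_pow p (\<Sum>I\<in>Pow {..<k}. (-1)^card I * \<mu> (\<lambda>i. if i \<in> I then x i else y i))"
    by (simp add: omega_sum)
  also have "\<dots> = omega_pow p ((-1)^k * \<mu> (psub p k x y))"
    by (rule omega_cong) (use p phase[OF ml p x y] in auto)
  finally show ?thesis .
qed


lemma cmod_sum_sign:
  "cmod (\<Sum>w\<in>A. omega_pow p ((-1)^k * t w)) = cmod (\<Sum>w\<in>A. omega_pow p (t w))"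
proof (cases "even k")
  case True
  then show ?thesis by simp
next
  case False
  then have "(\<Sum>w\<in>A. omega_pow p ((-1)^k * t w)) = cnj (\<Sum>w\<in>A. omega_pow p (t w))"
    by (simp add: omega_neg)
  then show ?thesis by (simp only: complex_mod_cnj)
qed

lemma corr:
  assumes p: "p > 1"
  shows "cmod (\<Sum>(x, y)\<in>prod_sp p k d \<times> prod_sp p k d.
            omega_pow p ((-1)^k * \<mu>1 (psub p k x y)) * cnj (omega_pow p ((-1)^k * \<mu>2 (psub p k x y))))
       = real (card (prod_sp p k d)) * real (card (prod_sp p k d)) * cmod (bias p k d (form_diff p \<mu>1 \<mu>2))"
proof -
  let ?P = "prod_sp p k d"
  let ?N = "card ?P"
  define q where "q h = omega_pow p ((-1)^k * form_diff p \<mu>1 \<mu>2 h)" for h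
  have eq: "omega_pow p ((-1)^k * \<mu>1 h) * cnj (omega_pow p ((-1)^k * \<mu>2 h)) = q h" for h
  proof -
    have "omega_pow p ((-1)^k * \<mu>1 h) * cnj (omega_pow p ((-1)^k * \<mu>2 h))
        = omega_pow p ((-1)^k * \<mu>1 h + - ((-1)^k * \<mu>2 h))"
      by (simp only: omega_add omega_neg)
    also have "\<dots> = omega_pow p ((-1)^k * (\<mu>1 h - \<mu>2 h))" by (simp add: algebra_simps)
    also have "\<dots> = q h" unfolding q_def form_diff_def
      by (rule omega_cong) (use p in \<open>auto intro: mod_mult_cong_r\<close>)
    finally show ?thesis .
  qed
  have "(\<Sum>(x, y)\<in>?P \<times> ?P. omega_pow p ((-1)^k * \<mu>1 (psub p k x y)) * cnj (omega_pow p ((-1)^k * \<mu>2 (psub p k x y))))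
      = (\<Sum>(x, y)\<in>?P \<times> ?P. q (psub p k x y))" by (simp add: eq)
  also have "\<dots> = (\<Sum>x\<in>?P. \<Sum>y\<in>?P. q (psub p k x y))" by (simp add: sum.cartesian_product)
  also have "\<dots> = (\<Sum>y\<in>?P. \<Sum>x\<in>?P. q (psub p k x y))" by (rule sum.swap)
  also have "\<dots> = (\<Sum>y\<in>?P. \<Sum>w\<in>?P. q w)"
    by (rule sum.cong[OF refl]) (use p in \<open>auto intro: reindex_psub\<close>)
  also have "\<dots> = of_nat ?N * (\<Sum>w\<in>?P. q w)" by simp
  finally have 1: "cmod (\<Sum>(x, y)\<in>?P \<times> ?P. omega_pow p ((-1)^k * \<mu>1 (psub p k x y)) * cnj (omega_pow p ((-1)^k * \<mu>2 (psub p k x y))))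
      = real ?N * cmod (\<Sum>w\<in>?P. q w)" by (simp add: norm_mult)
  have 2: "cmod (\<Sum>w\<in>?P. q w) = cmod (\<Sum>w\<in>?P. omega_pow p (form_diff p \<mu>1 \<mu>2 w))"
    unfolding q_def by (rule cmod_sum_sign)
  have Npos: "?N > 0" using p finite_prod_sp prod_sp_ne by (simp add: card_gt_0_iff)
  have 3: "(\<Sum>w\<in>?P. omega_pow p (form_diff p \<mu>1 \<mu>2 w)) = of_nat ?N * bias p k d (form_diff p \<mu>1 \<mu>2)"
    unfolding bias_def using Npos by simp
  show ?thesis unfolding 1 2 3 by (simp add: norm_mult)
qed

lemma cmod_conj_pow[simp]: "cmod (conj_pow c z) = cmod z"
  unfolding conj_pow_def by simp

lemma Fn_bound:
  assumes f: "\<forall>x\<in>prod_sp p k d. cmod (f x) \<le> 1"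
    and x: "x \<in> prod_sp p k d" and y: "y \<in> prod_sp p k d"
  shows "cmod (\<Prod>I\<in>Pow {..<k}. conj_pow (card I) (f (\<lambda>i. if i \<in> I then x i else y i))) \<le> 1"
proof -
  have "cmod (\<Prod>I\<in>Pow {..<k}. conj_pow (card I) (f (\<lambda>i. if i \<in> I then x i else y i)))
      = (\<Prod>I\<in>Pow {..<k}. cmod (f (\<lambda>i. if i \<in> I then x i else y i)))"
    by (simp add: prod_norm[symmetric])
  also have "\<dots> \<le> 1"
    by (rule prod_le_1) (use f mix_in[OF x y] in auto)
  finally show ?thesis .
qed


lemma almost_orth:
  fixes Fn :: "'z \<Rightarrow> complex" and e :: "nat \<Rightarrow> 'z \<Rightarrow> complex" and P :: "'z set"
  assumes fin: "finite P"
    and Fb: "\<forall>z\<in>P. cmod (Fn z) \<le> 1"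
    and big: "\<forall>i<n. A * real (card P) \<le> cmod (\<Sum>z\<in>P. Fn z * e i z)"
    and orth: "\<forall>i<n. \<forall>j<n. cmod (\<Sum>z\<in>P. e i z * cnj (e j z)) \<le> real (card P) * b + (if i = j then real (card P) else 0)"
    and A: "A \<ge> 0"
  shows "(real n * A * real (card P))^2 \<le> (real n * real n * real (card P) * b + real n * real (card P)) * real (card P)"
proof -
  define M where "M = real (card P)"
  define S where "S i = (\<Sum>z\<in>P. Fn z * e i z)" for i
  define c where "c i = (if S i = 0 then 1 else cnj (S i) / of_real (cmod (S i)))" for i
  have cS: "c i * S i = of_real (cmod (S i))" for i
  proof (cases "S i = 0")
    case True then show ?thesis by (simp add: c_def)
  next
    case False
    have "c i * S i = (S i * cnj (S i)) / of_real (cmod (S i))" by (simp add: c_def False)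
    also have "\<dots> = of_real ((cmod (S i))^2) / of_real (cmod (S i))" by (simp only: complex_norm_square)
    also have "\<dots> = of_real (cmod (S i))" using False by (simp add: power2_eq_square)
    finally show ?thesis .
  qed
  have cn: "cmod (c i) = 1" for i
    by (cases "S i = 0") (auto simp: c_def norm_divide)
  define G where "G z = (\<Sum>i<n. c i * e i z)" for z
  have step1: "real n * A * M \<le> (\<Sum>i<n. cmod (S i))"
  proof -
    have "(\<Sum>i<n. A * M) \<le> (\<Sum>i<n. cmod (S i))"
      by (rule sum_mono) (use big in \<open>auto simp: S_def M_def\<close>)
    then show ?thesis by simp
  qed
  have step2: "of_real (\<Sum>i<n. cmod (S i)) = (\<Sum>z\<in>P. Fn z * G z)"
  proof -
    have "of_real (\<Sum>i<n. cmod (S i)) = (\<Sum>i<n. c i * S i)" by (simp add: cS)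
    also have "\<dots> = (\<Sum>i<n. \<Sum>z\<in>P. c i * (Fn z * e i z))" by (simp add: S_def sum_distrib_left)
    also have "\<dots> = (\<Sum>z\<in>P. \<Sum>i<n. c i * (Fn z * e i z))" by (rule sum.swap)
    also have "\<dots> = (\<Sum>z\<in>P. Fn z * G z)" by (simp add: G_def sum_distrib_left mult.left_commute)
    finally show ?thesis .
  qed
  have step3: "(\<Sum>i<n. cmod (S i)) \<le> (\<Sum>z\<in>P. cmod (G z))"
  proof -
    have "(\<Sum>i<n. cmod (S i)) = cmod (of_real (\<Sum>i<n. cmod (S i)) :: complex)"
      unfolding norm_of_real by (rule abs_of_nonneg[symmetric]) (simp add: sum_nonneg)
    also have "\<dots> = cmod (\<Sum>z\<in>P. Fn z * G z)" by (simp only: step2)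
    also have "\<dots> \<le> (\<Sum>z\<in>P. cmod (Fn z * G z))" by (rule norm_sum)
    also have "\<dots> \<le> (\<Sum>z\<in>P. cmod (G z))"
    proof (rule sum_mono)
      fix z assume "z \<in> P"
      then have "cmod (Fn z) \<le> 1" using Fb by auto
      then show "cmod (Fn z * G z) \<le> cmod (G z)"
        by (simp add: norm_mult mult_left_le_one_le)
    qed
    finally show ?thesis .
  qed
  have step4: "(\<Sum>z\<in>P. cmod (G z))^2 \<le> (\<Sum>z\<in>P. (cmod (G z))^2) * M"
    unfolding M_def by (rule sum_squared_le_sum_of_squares)
  define X where "X i j = (\<Sum>z\<in>P. e i z * cnj (e j z))" for i j
  have step5: "(\<Sum>z\<in>P. (cmod (G z))^2) \<le> (\<Sum>i<n. \<Sum>j<n. cmod (X i j))"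
  proof -
    have GG: "G z * cnj (G z) = (\<Sum>i<n. \<Sum>j<n. (c i * cnj (c j)) * (e i z * cnj (e j z)))" for z
      unfolding G_def cnj_sum sum_product by (simp add: mult_ac)
    have "of_real (\<Sum>z\<in>P. (cmod (G z))^2) = (\<Sum>z\<in>P. G z * cnj (G z))"
      by (simp only: of_real_sum complex_norm_square)
    also have "\<dots> = (\<Sum>z\<in>P. \<Sum>i<n. \<Sum>j<n. (c i * cnj (c j)) * (e i z * cnj (e j z)))"
      by (simp add: GG)
    also have "\<dots> = (\<Sum>i<n. \<Sum>z\<in>P. \<Sum>j<n. (c i * cnj (c j)) * (e i z * cnj (e j z)))"
      by (rule sum.swap)
    also have "\<dots> = (\<Sum>i<n. \<Sum>j<n. \<Sum>z\<in>P. (c i * cnj (c j)) * (e i z * cnj (e j z)))"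
      by (rule sum.cong[OF refl], rule sum.swap)
    also have "\<dots> = (\<Sum>i<n. \<Sum>j<n. (c i * cnj (c j)) * X i j)"
      by (simp add: X_def sum_distrib_left)
    finally have eq: "of_real (\<Sum>z\<in>P. (cmod (G z))^2) = (\<Sum>i<n. \<Sum>j<n. (c i * cnj (c j)) * X i j)" .
    have "(\<Sum>z\<in>P. (cmod (G z))^2) = cmod (of_real (\<Sum>z\<in>P. (cmod (G z))^2) :: complex)"
      unfolding norm_of_real by (rule abs_of_nonneg[symmetric]) (simp add: sum_nonneg)
    also have "\<dots> = cmod (\<Sum>i<n. \<Sum>j<n. (c i * cnj (c j)) * X i j)" by (simp only: eq)
    also have "\<dots> \<le> (\<Sum>i<n. cmod (\<Sum>j<n. (c i * cnj (c j)) * X i j))" by (rule norm_sum)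
    also have "\<dots> \<le> (\<Sum>i<n. \<Sum>j<n. cmod ((c i * cnj (c j)) * X i j))"
      by (rule sum_mono) (rule norm_sum)
    also have "\<dots> = (\<Sum>i<n. \<Sum>j<n. cmod (X i j))" by (simp add: norm_mult cn)
    finally show ?thesis .
  qed
  have step6: "(\<Sum>i<n. \<Sum>j<n. cmod (X i j)) \<le> real n * real n * M * b + real n * M"
  proof -
    have o: "cmod (X i j) \<le> M * b + (if i = j then M else 0)" if "i < n" "j < n" for i j
      using orth that unfolding X_def M_def by blast
    have "(\<Sum>i<n. \<Sum>j<n. cmod (X i j)) \<le> (\<Sum>i<n. \<Sum>j<n. M * b + (if i = j then M else 0))"
      by (intro sum_mono) (simp add: o)
    also have "\<dots> = (\<Sum>i<n. real n * M * b + M)"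
      by (simp add: sum.distrib)
    also have "\<dots> = real n * real n * M * b + real n * M" by (simp add: sum.distrib algebra_simps)
    finally show ?thesis .
  qed
  have M0: "M \<ge> 0" by (simp add: M_def)
  have "(real n * A * M)^2 \<le> (\<Sum>i<n. cmod (S i))^2"
    by (rule power_mono[OF step1]) (use A M0 in simp)
  also have "\<dots> \<le> (\<Sum>z\<in>P. cmod (G z))^2"
    by (rule power_mono[OF step3]) (simp add: sum_nonneg)
  also have "\<dots> \<le> (\<Sum>z\<in>P. (cmod (G z))^2) * M" by (rule step4)
  also have "\<dots> \<le> (real n * real n * M * b + real n * M) * M"
    by (rule mult_right_mono[OF order.trans[OF step5 step6] M0])
  finally show ?thesis unfolding M_def .
qed


lemma final_arith:
  fixes \<epsilon> A b M :: real and n k :: nat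
  assumes e0: "0 < \<epsilon>" and e1: "\<epsilon> \<le> 1" and M: "M > 0" and A: "A = \<epsilon>^(2^k)"
    and b: "b = (\<epsilon>/1000)^(2^(2*k+2))"
    and main: "(real n * A * M)^2 \<le> (real n * real n * M * b + real n * M) * M"
  shows "real n < 10 * (1/\<epsilon>)^(2^(k+1))"
proof -
  define E where "E = \<epsilon>^(2^(k+1))"
  have E0: "E > 0" unfolding E_def using e0 by simp
  have AE: "A^2 = E" unfolding A E_def by (simp add: power_mult[symmetric] mult.commute)
  have "M^2 * (real n * real n * E) = (real n * A * M)^2" by (simp add: AE[symmetric] power2_eq_square algebra_simps)
  also have "\<dots> \<le> M^2 * (real n * real n * b + real n)"
    using main by (simp add: power2_eq_square algebra_simps)
  finally have m2: "real n * real n * E \<le> real n * real n * b + real n"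
    using M by (simp add: mult_le_cancel_left)
  have bE: "b \<le> E / 1000"
  proof -
    have "b = \<epsilon>^(2^(2*k+2)) / 1000^(2^(2*k+2))" unfolding b by (simp add: power_divide)
    also have "\<dots> \<le> E / 1000^(2^(2*k+2))"
    proof (rule divide_right_mono)
      have "(2::nat)^(k+1) \<le> 2^(2*k+2)" by (rule power_increasing) auto
      then show "\<epsilon>^(2^(2*k+2)) \<le> E" unfolding E_def by (rule power_decreasing) (use e0 e1 in auto)
    qed simp
    also have "\<dots> \<le> E / 1000"
    proof (rule divide_left_mono)
      have "(1000::real)^1 \<le> 1000^(2^(2*k+2))" by (rule power_increasing) auto
      then show "1000 \<le> (1000::real)^(2^(2*k+2))" by simp
    qed (use E0 in auto)
    finally show ?thesis .
  qed
  have rhs: "10 * (1/\<epsilon>)^(2^(k+1)) = 10 / E" unfolding E_def by (simp add: power_one_over)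
  show ?thesis
  proof (cases "n = 0")
    case True then show ?thesis using rhs E0 by simp
  next
    case False
    then have n0: "real n > 0" by simp
    have "real n * (real n * E) \<le> real n * (real n * b + 1)"
      using m2 by (simp add: algebra_simps)
    then have "real n * E \<le> real n * b + 1"
      using n0 by (simp only: mult_le_cancel_left_pos)
    also have "\<dots> \<le> real n * (E / 1000) + 1" using bE n0 by simp
    finally have "real n * E * 999 \<le> 1000" by simp
    then have "real n * E < 10" by simp
    then show ?thesis unfolding rhs using E0 by (simp add: pos_less_divide_eq)
  qed
qed


theorem theorem32:
  fixes p k :: nat and d :: "nat \<Rightarrow> nat" and \<epsilon> :: real
    and f :: "(nat \<Rightarrow> nat \<Rightarrow> int) \<Rightarrow> complex"
    and n :: nat and \<mu> :: "nat \<Rightarrow> (nat \<Rightarrow> nat \<Rightarrow> int) \<Rightarrow> int"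
  assumes "prime p"
    and "\<epsilon> > 0"
    and "\<forall>x\<in>prod_sp p k d. cmod (f x) \<le> 1"
    and "\<forall>i<n. \<mu> i \<in> spec_ml p k d \<epsilon> f"
    and "\<forall>i<n. \<forall>j<n. i \<noteq> j \<longrightarrow>
           cmod (bias p k d (form_diff p (\<mu> i) (\<mu> j))) \<le> (\<epsilon> / 1000) ^ (2 ^ (2 * k + 2))"
  shows "int n < \<lceil>10 * (1 / \<epsilon>) ^ (2 ^ (k + 1))\<rceil>"
proof -
  note pr = assms(1) and e0 = assms(2) and fb = assms(3) and spec = assms(4) and bb = assms(5)
  have p1: "p > 1" using prime_gt_1_nat[OF pr] by simp
  define P where "P = prod_sp p k d"
  define P2 where "P2 = P \<times> P"
  define M where "M = real (card P2)"
  have finP: "finite P" unfolding P_def by (rule finite_prod_sp)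
  have finP2: "finite P2" unfolding P2_def using finP by simp
  have Pne: "P \<noteq> {}" unfolding P_def using prod_sp_ne p1 by simp
  have M0: "M > 0" unfolding M_def P2_def using finP Pne by (simp add: card_gt_0_iff)
  have MN: "M = real (card P) * real (card P)" unfolding M_def P2_def by (simp add: card_cartesian_product)
  define Fn where "Fn = (\<lambda>(x, y). \<Prod>I\<in>Pow {..<k}. conj_pow (card I) (f (\<lambda>i. if i \<in> I then x i else y i)))"
  define e where "e i = (\<lambda>(x, y). omega_pow p ((-1)^k * \<mu> i (psub p k x y)))" for i
  define A where "A = \<epsilon>^(2^k)"
  define b where "b = (\<epsilon>/1000)^(2^(2*k+2))"
  have A0: "A \<ge> 0" unfolding A_def using e0 by simp
  have b0: "b \<ge> 0" unfolding b_def using e0 by simp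
  have Fb: "\<forall>z\<in>P2. cmod (Fn z) \<le> 1"
    unfolding P2_def P_def Fn_def using Fn_bound[OF fb] by auto
  have big: "\<forall>i<n. A * real (card P2) \<le> cmod (\<Sum>z\<in>P2. Fn z * e i z)"
  proof (intro allI impI)
    fix i assume i: "i < n"
    then have ml: "multilinear_form p k d (\<mu> i)"
      and bn: "\<epsilon> \<le> box_norm p k d (\<lambda>x. f x * omega_pow p (\<mu> i x))"
      using spec unfolding spec_ml_def by auto
    have sumeq: "(\<Sum>(x, y)\<in>P2. \<Prod>I\<in>Pow {..<k}. conj_pow (card I) ((\<lambda>x. f x * omega_pow p (\<mu> i x)) (\<lambda>j. if j \<in> I then x j else y j)))
        = (\<Sum>z\<in>P2. Fn z * e i z)"
    proof (rule sum.cong[OF refl])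
      fix z assume "z \<in> P2"
      then obtain x y where z: "z = (x, y)" and x: "x \<in> prod_sp p k d" and y: "y \<in> prod_sp p k d"
        unfolding P2_def P_def by auto
      show "(case z of (x, y) \<Rightarrow> \<Prod>I\<in>Pow {..<k}. conj_pow (card I) ((\<lambda>x. f x * omega_pow p (\<mu> i x)) (\<lambda>j. if j \<in> I then x j else y j)))
          = Fn z * e i z"
        unfolding z Fn_def e_def using box_term[OF ml p1 x y, of f] by simp
    qed
    define R where "R = cmod (\<Sum>z\<in>P2. Fn z * e i z) / M"
    have R0: "R \<ge> 0" unfolding R_def using M0 by simp
    have "\<epsilon> \<le> root (2^k) R"
      using bn unfolding box_norm_def R_def M_def
      by (simp only: P_def P2_def sumeq[unfolded P2_def P_def] norm_divide norm_of_nat)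
    then have "\<epsilon>^(2^k) \<le> (root (2^k) R)^(2^k)" by (rule power_mono) (use e0 in simp)
    also have "\<dots> = R" using R0 by simp
    finally have "A \<le> R" unfolding A_def .
    then show "A * real (card P2) \<le> cmod (\<Sum>z\<in>P2. Fn z * e i z)"
      using M0 unfolding R_def M_def by (simp add: pos_le_divide_eq)
  qed
  have orth: "\<forall>i<n. \<forall>j<n. cmod (\<Sum>z\<in>P2. e i z * cnj (e j z)) \<le> real (card P2) * b + (if i = j then real (card P2) else 0)"
  proof (intro allI impI)
    fix i j assume i: "i < n" and j: "j < n"
    show "cmod (\<Sum>z\<in>P2. e i z * cnj (e j z)) \<le> real (card P2) * b + (if i = j then real (card P2) else 0)"
    proof (cases "i = j")
      case True
      have one: "e i z * cnj (e i z) = 1" for z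
      proof -
        have "e i z * cnj (e i z) = of_real ((cmod (e i z))^2)" by (simp only: complex_norm_square)
        also have "cmod (e i z) = 1" unfolding e_def by (simp add: case_prod_beta)
        finally show ?thesis by simp
      qed
      have "cmod (\<Sum>z\<in>P2. e i z * cnj (e j z)) = real (card P2)"
        unfolding True[symmetric] one by simp
      then show ?thesis using True b0 by simp
    next
      case False
      have "(\<Sum>z\<in>P2. e i z * cnj (e j z)) = (\<Sum>(x, y)\<in>prod_sp p k d \<times> prod_sp p k d.
            omega_pow p ((-1)^k * \<mu> i (psub p k x y)) * cnj (omega_pow p ((-1)^k * \<mu> j (psub p k x y))))"
        unfolding P2_def P_def e_def by (simp add: case_prod_beta)
      then have "cmod (\<Sum>z\<in>P2. e i z * cnj (e j z)) = M * cmod (bias p k d (form_diff p (\<mu> i) (\<mu> j)))"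
        using corr[OF p1, of k "\<mu> i" "\<mu> j" d] unfolding MN P_def by simp
      also have "\<dots> \<le> M * b" using bb i j False M0 unfolding b_def by simp
      finally show ?thesis using False unfolding M_def by simp
    qed
  qed
  have main: "(real n * A * M)^2 \<le> (real n * real n * M * b + real n * M) * M"
    using almost_orth[OF finP2 Fb big orth A0] unfolding M_def .
  show ?thesis
  proof (cases "n = 0")
    case True
    then show ?thesis using e0 by simp
  next
    case False
    have "A * M \<le> cmod (\<Sum>z\<in>P2. Fn z * e 0 z)" using big False unfolding M_def by simp
    also have "\<dots> \<le> (\<Sum>z\<in>P2. cmod (Fn z * e 0 z))" by (rule norm_sum)
    also have "\<dots> \<le> (\<Sum>z\<in>P2. 1)"
    proof (rule sum_mono)
      fix z assume "z \<in> P2"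
      then have "cmod (Fn z) \<le> 1" using Fb by auto
      moreover have "cmod (e 0 z) = 1" unfolding e_def by (simp add: case_prod_beta)
      ultimately show "cmod (Fn z * e 0 z) \<le> 1" by (simp add: norm_mult)
    qed
    also have "\<dots> = M" unfolding M_def by simp
    finally have "A \<le> 1" using M0 by simp
    then have e1: "\<epsilon> \<le> 1" unfolding A_def using e0 by (simp add: power_le_one_iff)
    have "real n < 10 * (1/\<epsilon>)^(2^(k+1))"
      by (rule final_arith[OF e0 e1 M0 A_def b_def main])
    then show ?thesis by (simp add: less_ceiling_iff)
  qed
qed

end
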